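(* For all $\mu\in{\cal S}$, $$\langle{\cal F}_{\rm A}(\mu)\rangle=\langle\mu\rangle^2\qquad\text{and}\qquad\langle{\cal F}_{\rm b}(\mu)\rangle\leq2\langle\mu\rangle,$$ and consequently $$\langle{\cal F}(\mu)\rangle\leq4\langle\mu\rangle^2\qquad\text{and}\qquad\langle\widehat{\cal F}(\mu)\rangle\leq2\langle\mu\rangle^2.$$
   Context: **Spaces.** $S=\{0,1\}^{\mathbb N}$ with $\mathbb N=\{0,1,\dots\}$. ${\cal M}$ is the set of probability laws on $S$, and ${\cal S}\subset{\cal M}$ the shift-invariant (stationary) laws. For $\mu\in{\cal S}$, $\langle\mu\rangle:=\int\mu(dy)\,y(i)$, which does not depend on $i$. **Column maps.** $\Phi_{\rm A}(y,z)(k)=y(k)\wedge z(k)$ and $\Phi_{\rm b}(y)(k)=y(k)\vee y(k+1)$. ${\cal F}_{\rm A}(\mu)$ is the law of $\Phi_{\rm A}(Y,Z)$ and ${\cal F}_{\rm b}(\mu)$ the law of $\Phi_{\rm b}(Y)$, with $Y,Z$ independent of law $\mu$. ${\cal F}={\cal F}_{\rm A}\circ{\cal F}_{\rm b}$ and $\widehat{\cal F}={\cal F}_{\rm b}\circ{\cal F}_{\rm A}$; these maps send ${\cal S}$ into ${\cal S}$. *)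

theory Defs
  imports "HOL-Probability.Probability"
begin

definition SM :: "(nat \<Rightarrow> bool) measure" where
  "SM = Pi\<^sub>M UNIV (\<lambda>_. count_space (UNIV :: bool set))"

definition is_law :: "(nat \<Rightarrow> bool) measure \<Rightarrow> bool" where
  "is_law \<mu> \<longleftrightarrow> prob_space \<mu> \<and> sets \<mu> = sets SM"

definition shift :: "(nat \<Rightarrow> bool) \<Rightarrow> (nat \<Rightarrow> bool)" where
  "shift y = (\<lambda>k. y (Suc k))"

text \<open>Shift-invariant (stationary) laws (the set S).\<close>
definition stationary :: "(nat \<Rightarrow> bool) measure \<Rightarrow> bool" where
  "stationary \<mu> \<longleftrightarrow> is_law \<mu> \<and> distr \<mu> SM shift = \<mu>"

text \<open>Density <mu> = integral of y(i); we take i = 0.\<close>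
definition dens :: "(nat \<Rightarrow> bool) measure \<Rightarrow> real" where
  "dens \<mu> = (\<integral>y. (if y 0 then 1 else 0) \<partial>\<mu>)"

definition PhiA :: "(nat \<Rightarrow> bool) \<Rightarrow> (nat \<Rightarrow> bool) \<Rightarrow> (nat \<Rightarrow> bool)" where
  "PhiA y z = (\<lambda>k. y k \<and> z k)"

definition Phib :: "(nat \<Rightarrow> bool) \<Rightarrow> (nat \<Rightarrow> bool)" where
  "Phib y = (\<lambda>k. y k \<or> y (Suc k))"

definition FA :: "(nat \<Rightarrow> bool) measure \<Rightarrow> (nat \<Rightarrow> bool) measure" where
  "FA \<mu> = distr (\<mu> \<Otimes>\<^sub>M \<mu>) SM (\<lambda>(y, z). PhiA y z)"

definition Fb :: "(nat \<Rightarrow> bool) measure \<Rightarrow> (nat \<Rightarrow> bool) measure" where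
  "Fb \<mu> = distr \<mu> SM Phib"

definition F :: "(nat \<Rightarrow> bool) measure \<Rightarrow> (nat \<Rightarrow> bool) measure" where
  "F = FA \<circ> Fb"

definition Fhat :: "(nat \<Rightarrow> bool) measure \<Rightarrow> (nat \<Rightarrow> bool) measure" where
  "Fhat = Fb \<circ> FA"

end

theory Submission
  imports Defs
begin
lemma space_SM: "space SM = UNIV" unfolding SM_def by (simp add: space_PiM)
lemma sets_k: "{y. y k} \<in> sets SM"
proof -
  have "{y \<in> space SM. y k} \<in> sets SM" unfolding SM_def by measurable
  thus ?thesis by (simp add: space_SM)
qed
lemma meas_Phib: "Phib \<in> measurable SM SM"
  unfolding SM_def Phib_def by (rule measurable_PiM_single') (auto simp: space_PiM)
lemma meas_shift: "shift \<in> measurable SM SM"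
  unfolding SM_def shift_def by (rule measurable_PiM_single') (auto simp: space_PiM)
lemma meas_PhiA: "(\<lambda>(y,z). PhiA y z) \<in> measurable (SM \<Otimes>\<^sub>M SM) SM"
proof -
  have "(\<lambda>p. PhiA (fst p) (snd p)) \<in> measurable (SM \<Otimes>\<^sub>M SM) SM"
    unfolding SM_def PhiA_def by (rule measurable_PiM_single') (auto simp: space_PiM)
  thus ?thesis by (simp add: case_prod_beta')
qed

definition m :: "(nat \<Rightarrow> bool) measure \<Rightarrow> nat \<Rightarrow> real" where
  "m \<nu> k = measure \<nu> {y. y k}"

lemma law_space: "is_law \<nu> \<Longrightarrow> space \<nu> = UNIV"
  unfolding is_law_def using sets_eq_imp_space_eq space_SM by metis

lemma law_meas: "is_law \<nu> \<Longrightarrow> f \<in> measurable SM N \<Longrightarrow> f \<in> measurable \<nu> N"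
  unfolding is_law_def using measurable_cong_sets by blast

lemma dens_m: assumes "is_law \<nu>" shows "dens \<nu> = m \<nu> 0"
proof -
  have e: "(\<lambda>y. if y 0 then 1 else 0 :: real) = indicator {y. y 0}" by (auto simp: indicator_def)
  show ?thesis unfolding dens_def m_def e by (simp add: law_space[OF assms])
qed

lemma m_nonneg: "m \<nu> k \<ge> 0" unfolding m_def by simp

lemma law_Fb: assumes "is_law \<nu>" shows "is_law (Fb \<nu>)"
proof -
  interpret prob_space \<nu> using assms unfolding is_law_def by auto
  show ?thesis unfolding is_law_def Fb_def
    using prob_space_distr law_meas[OF assms meas_Phib] by auto
qed

lemma FA_m: assumes "is_law \<nu>" shows "is_law (FA \<nu>) \<and> m (FA \<nu>) k = (m \<nu> k)\<^sup>2"
proof -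
  interpret prob_space \<nu> using assms unfolding is_law_def by auto
  interpret P: pair_prob_space \<nu> \<nu> by unfold_locales
  have PS: "pair_sigma_finite \<nu> \<nu>" by unfold_locales
  have sp: "sets (\<nu> \<Otimes>\<^sub>M \<nu>) = sets (SM \<Otimes>\<^sub>M SM)"
    using assms unfolding is_law_def by (intro sets_pair_measure_cong) auto
  have meas: "(\<lambda>(y,z). PhiA y z) \<in> measurable (\<nu> \<Otimes>\<^sub>M \<nu>) SM"
    using meas_PhiA measurable_cong_sets[OF sp refl] by blast
  have A: "{y. y k} \<in> sets \<nu>" using assms sets_k unfolding is_law_def by auto
  have pre: "(\<lambda>(y,z). PhiA y z) -` {y. y k} \<inter> space (\<nu> \<Otimes>\<^sub>M \<nu>) = {y. y k} \<times> {y. y k}"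
    by (auto simp: PhiA_def space_pair_measure law_space[OF assms])
  have "m (FA \<nu>) k = measure (\<nu> \<Otimes>\<^sub>M \<nu>) ({y. y k} \<times> {y. y k})"
    unfolding m_def FA_def using measure_distr[OF meas sets_k] pre by simp
  also have "\<dots> = (m \<nu> k)\<^sup>2"
    unfolding measure_def m_def using emeasure_pair_measure_Times[OF A A]
    by (simp add: enn2real_mult power2_eq_square)
  finally show ?thesis unfolding is_law_def FA_def
    using P.prob_space_distr[OF meas] by simp
qed

lemma Fb_m: assumes "is_law \<nu>" shows "m (Fb \<nu>) 0 \<le> m \<nu> 0 + m \<nu> 1"
proof -
  interpret prob_space \<nu> using assms unfolding is_law_def by auto
  have meas: "Phib \<in> measurable \<nu> SM" using law_meas[OF assms meas_Phib] .
  have pre: "Phib -` {y. y 0} \<inter> space \<nu> = {y. y 0} \<union> {y. y 1}"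
    by (auto simp: Phib_def law_space[OF assms])
  have A: "\<And>k. {y. y k} \<in> sets \<nu>" using assms sets_k unfolding is_law_def by auto
  have "m (Fb \<nu>) 0 = measure \<nu> ({y. y 0} \<union> {y. y 1})"
    unfolding m_def Fb_def using measure_distr[OF meas sets_k] pre by simp
  also have "\<dots> \<le> m \<nu> 0 + m \<nu> 1" unfolding m_def
    using measure_Un_le[OF A A] by simp
  finally show ?thesis .
qed

lemma stat_m: assumes "stationary \<mu>" shows "m \<mu> 1 = m \<mu> 0"
proof -
  have L: "is_law \<mu>" using assms unfolding stationary_def by auto
  have meas: "shift \<in> measurable \<mu> SM" using law_meas[OF L meas_shift] .
  have pre: "shift -` {y. y 0} \<inter> space \<mu> = {y. y 1}"
    by (auto simp: shift_def law_space[OF L])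
  have "m \<mu> 0 = measure (distr \<mu> SM shift) {y. y 0}"
    using assms unfolding stationary_def m_def by simp
  also have "\<dots> = m \<mu> 1" unfolding m_def using measure_distr[OF meas sets_k] pre by simp
  finally show ?thesis by simp
qed

theorem lemma18:
  assumes "stationary \<mu>"
  shows "dens (FA \<mu>) = (dens \<mu>)\<^sup>2 \<and> dens (Fb \<mu>) \<le> 2 * dens \<mu>
       \<and> dens (F \<mu>) \<le> 4 * (dens \<mu>)\<^sup>2 \<and> dens (Fhat \<mu>) \<le> 2 * (dens \<mu>)\<^sup>2"
proof -
  have L: "is_law \<mu>" using assms unfolding stationary_def by auto
  have s: "m \<mu> 1 = m \<mu> 0" using stat_m[OF assms] .
  have LA: "is_law (FA \<mu>)" using FA_m[OF L] by blast
  have LB: "is_law (Fb \<mu>)" using law_Fb[OF L] .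
  have 1: "dens (FA \<mu>) = (dens \<mu>)\<^sup>2" using FA_m[OF L] dens_m[OF L] dens_m[OF LA] by simp
  have 2: "dens (Fb \<mu>) \<le> 2 * dens \<mu>" using Fb_m[OF L] dens_m[OF L] dens_m[OF LB] s by simp
  have "dens (F \<mu>) = (dens (Fb \<mu>))\<^sup>2" unfolding F_def
    using FA_m[OF LB] dens_m[OF LB] dens_m[of "FA (Fb \<mu>)"] by simp
  also have "\<dots> \<le> (2 * dens \<mu>)\<^sup>2"
    using 2 dens_m[OF LB] m_nonneg by (intro power_mono) auto
  finally have 3: "dens (F \<mu>) \<le> 4 * (dens \<mu>)\<^sup>2" by (simp add: power_mult_distrib)
  have "dens (Fhat \<mu>) \<le> m (FA \<mu>) 0 + m (FA \<mu>) 1" unfolding Fhat_def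
    using Fb_m[OF LA] dens_m[OF law_Fb[OF LA]] by simp
  also have "\<dots> = 2 * (dens \<mu>)\<^sup>2" using FA_m[OF L] s dens_m[OF L] by simp
  finally have 4: "dens (Fhat \<mu>) \<le> 2 * (dens \<mu>)\<^sup>2" .
  show ?thesis using 1 2 3 4 by blast
qed
end
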